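(* Let $d\ge1$, $\sigma>0$, and let $(P_t)_{t\ge0}$ be the heat semigroup generated by $(Lf)(p,\xi)=\sum_{j=1}^d p_j\,\partial_{\xi_j}f(p,\xi)+\frac{\sigma^2}{2}\Delta_p f(p,\xi)$ on $\mathbb{R}^d\times\mathbb{R}^d$. Let $f\in C^1(\mathbb{R}^d\times\mathbb{R}^d)$ be non-negative and bounded. Then for every $t>0$, \[\sum_{i=1}^d\left[\Big(\frac{\partial \ln P_tf}{\partial p_i}-\frac{t}{2}\frac{\partial \ln P_tf}{\partial \xi_i}\Big)^2+\frac{t^2}{12}\Big(\frac{\partial \ln P_tf}{\partial\xi_i}\Big)^2\right]\le\frac{2}{\sigma^2t\,P_tf}\big(P_t(f\ln f)-P_tf\ln P_tf\big).\]
   Context: $P_tf(p,\xi)=\mathbb{E}\,f\big(p+B_t,\xi+tp+\int_0^tB_sds\big)$, where $B$ is a Brownian motion in $\mathbb{R}^d$ with variance $\sigma^2$ started at $0$. $\Delta_p$ is the Laplacian in the variable $p$. *)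

theory Defs
  imports "HOL-Analysis.Analysis"
begin

text \<open>P_t f(p,xi) = E f(p + B_t, xi + t p + int_0^t B_s ds), B a d-dimensional Brownian motion
  with variance sigma^2 started at 0.  For each coordinate j the pair (B_t^j, int_0^t B_s^j ds)
  is a centred Gaussian vector with covariance matrix
  [[sigma^2 t, sigma^2 t^2/2], [sigma^2 t^2/2, sigma^2 t^3/3]], and the coordinates are
  independent.\<close>

definition kolm_var_b :: "real \<Rightarrow> real \<Rightarrow> real" where
  "kolm_var_b \<sigma> t = \<sigma>\<^sup>2 * t"

definition kolm_cov :: "real \<Rightarrow> real \<Rightarrow> real" where
  "kolm_cov \<sigma> t = \<sigma>\<^sup>2 * t\<^sup>2 / 2"

definition kolm_var_c :: "real \<Rightarrow> real \<Rightarrow> real" where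
  "kolm_var_c \<sigma> t = \<sigma>\<^sup>2 * t ^ 3 / 3"

definition kolm_det :: "real \<Rightarrow> real \<Rightarrow> real" where
  "kolm_det \<sigma> t = kolm_var_b \<sigma> t * kolm_var_c \<sigma> t - (kolm_cov \<sigma> t)\<^sup>2"

definition kolm_density2 :: "real \<Rightarrow> real \<Rightarrow> real \<Rightarrow> real \<Rightarrow> real" where
  "kolm_density2 \<sigma> t b c =
     exp (- (kolm_var_c \<sigma> t * b\<^sup>2 - 2 * kolm_cov \<sigma> t * b * c + kolm_var_b \<sigma> t * c\<^sup>2)
            / (2 * kolm_det \<sigma> t))
     / (2 * pi * sqrt (kolm_det \<sigma> t))"

definition kolm_density :: "real \<Rightarrow> real \<Rightarrow> real^'d::finite \<Rightarrow> real^'d \<Rightarrow> real" where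
  "kolm_density \<sigma> t b c = (\<Prod>j\<in>UNIV. kolm_density2 \<sigma> t (b $ j) (c $ j))"

definition kolm_sg :: "real \<Rightarrow> real \<Rightarrow> ((real^'d::finite) \<times> (real^'d) \<Rightarrow> real)
                        \<Rightarrow> (real^'d) \<times> (real^'d) \<Rightarrow> real" where
  "kolm_sg \<sigma> t f x =
     (\<integral>b. (\<integral>c. kolm_density \<sigma> t b c * f (fst x + b, snd x + t *\<^sub>R fst x + c) \<partial>lborel) \<partial>lborel)"

end

theory Submission
  imports Defs "HOL-Probability.Distributions"
begin

lemma abs_exp_sub_one_le: fixes x :: real shows "\<bar>exp x - 1\<bar> \<le> \<bar>x\<bar> * exp \<bar>x\<bar>"
proof (cases "x \<ge> 0")
  case True
  have "1 - x \<le> exp (-x)" using exp_ge_add_one_self[of "-x"] by simp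
  hence "exp x * (1 - x) \<le> exp x * exp (-x)" by (intro mult_left_mono) auto
  hence "exp x - x * exp x \<le> 1" by (simp add: exp_minus field_simps)
  thus ?thesis using True by (simp add: algebra_simps)
next
  case False
  have "1 + x \<le> exp x" using exp_ge_add_one_self[of x] by simp
  moreover have "exp x \<le> 1" using False by simp
  moreover have "1 \<le> exp \<bar>x\<bar>" by simp
  moreover have "0 \<le> \<bar>x\<bar>" by simp
  ultimately have "\<bar>exp x - 1\<bar> \<le> \<bar>x\<bar>" using False by (simp only: abs_le_iff) linarith
  also have "\<dots> \<le> \<bar>x\<bar> * exp \<bar>x\<bar>" using \<open>1 \<le> exp \<bar>x\<bar>\<close> by (simp add: mult_le_cancel_left1)
  finally show ?thesis .
qed

lemma young_ent: fixes a z :: real assumes "0 \<le> a" shows "a * z \<le> a * ln a - a + exp z"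
proof (cases "a = 0")
  case True then show ?thesis by simp
next
  case False
  hence a: "a > 0" using assms by simp
  have "1 + (z - ln a) \<le> exp (z - ln a)" by (rule exp_ge_add_one_self)
  hence "a * (1 + (z - ln a)) \<le> a * exp (z - ln a)" using a by (intro mult_left_mono) auto
  also have "a * exp (z - ln a) = exp z" using a by (simp add: exp_diff)
  finally show ?thesis by (simp add: algebra_simps)
qed

lemma abs_xlnx_le: fixes x :: real assumes "0 \<le> x" shows "\<bar>x * ln x\<bar> \<le> x\<^sup>2 + 1"
proof (cases "x = 0")
  case True then show ?thesis by simp
next
  case False
  hence x: "x > 0" using assms by simp
  have "ln x \<le> x - 1" using x by (rule ln_le_minus_one)
  hence u: "x * ln x \<le> x * (x - 1)" using x by (intro mult_left_mono) auto
  have "ln (1/x) \<le> 1/x - 1" using x by (intro ln_le_minus_one) auto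
  hence "- ln x \<le> 1/x - 1" using x by (simp add: ln_div)
  hence "x * (- ln x) \<le> x * (1/x - 1)" using x by (intro mult_left_mono) auto
  moreover have "x * (1/x - 1) = 1 - x" using x by (simp add: field_simps)
  ultimately have l: "- (x * ln x) \<le> 1 - x" by simp
  have "x * (x - 1) \<le> x\<^sup>2 + 1" using x by (simp add: power2_eq_square algebra_simps)
  moreover have "0 \<le> x\<^sup>2" by simp
  ultimately show ?thesis using u l x by (simp only: abs_le_iff) linarith
qed

lemma abs_le_exp_sum: fixes z :: real shows "\<bar>z\<bar> \<le> exp z + exp (- z)"
proof -
  have "\<bar>z\<bar> \<le> exp \<bar>z\<bar>" using exp_ge_add_one_self[of "\<bar>z\<bar>"] by linarith
  moreover have "exp \<bar>z\<bar> \<le> exp z + exp (- z)" by (cases "z \<ge> 0") auto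
  ultimately show ?thesis by simp
qed

lemma gibbs:
  fixes M :: "'a measure" and K g Z :: "'a \<Rightarrow> real"
  assumes Km: "K \<in> borel_measurable M" and K0: "\<And>y. 0 \<le> K y" and Ki: "integrable M K"
    and K1: "(\<integral>y. K y \<partial>M) = 1"
    and gm: "g \<in> borel_measurable M" and g0: "\<And>y. 0 \<le> g y" and gB: "\<And>y. g y \<le> B"
    and Zm: "Z \<in> borel_measurable M" and Zi1: "integrable M (\<lambda>y. K y * exp (Z y))"
    and Zi2: "integrable M (\<lambda>y. K y * exp (- Z y))"
    and G: "0 < (\<integral>y. K y * g y \<partial>M)"
  shows "(\<integral>y. K y * g y * Z y \<partial>M) \<le> (\<integral>y. K y * (g y * ln (g y)) \<partial>M)
      - (\<integral>y. K y * g y \<partial>M) * ln (\<integral>y. K y * g y \<partial>M)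
      + (\<integral>y. K y * g y \<partial>M) * ln (\<integral>y. K y * exp (Z y) \<partial>M)"
proof -
  define G where "G = (\<integral>y. K y * g y \<partial>M)"
  define E where "E = (\<integral>y. K y * exp (Z y) \<partial>M)"
  have B0: "0 \<le> B" using g0 gB order_trans by blast
  have E0: "0 < E"
  proof (rule ccontr)
    assume "\<not> 0 < E"
    moreover have "0 \<le> E" unfolding E_def using K0 by (intro integral_nonneg_AE) auto
    ultimately have "E = 0" by simp
    hence "AE y in M. K y * exp (Z y) = 0"
      using integral_nonneg_eq_0_iff_AE[OF Zi1] K0 unfolding E_def by auto
    hence "AE y in M. K y = 0" by eventually_elim simp
    hence "(\<integral>y. K y \<partial>M) = (\<integral>y. 0 \<partial>M)" by (intro integral_cong_AE) (auto simp: Km)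
    with K1 show False by simp
  qed
  have iKg: "integrable M (\<lambda>y. K y * g y)"
  proof (rule Bochner_Integration.integrable_bound[of _ "\<lambda>y. B * K y"])
    show "integrable M (\<lambda>y. B * K y)" using Ki by simp
    show "(\<lambda>y. K y * g y) \<in> borel_measurable M" using Km gm by measurable
    show "AE y in M. norm (K y * g y) \<le> norm (B * K y)"
    proof (intro AE_I2)
      fix y
      have "K y * g y \<le> K y * B" using K0[of y] gB[of y] by (intro mult_left_mono) auto
      thus "norm (K y * g y) \<le> norm (B * K y)" using K0[of y] g0[of y] B0 by (simp add: abs_mult mult.commute)
    qed
  qed
  have iKgl: "integrable M (\<lambda>y. K y * (g y * ln (g y)))"
  proof (rule Bochner_Integration.integrable_bound[of _ "\<lambda>y. (B\<^sup>2 + 1) * K y"])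
    show "integrable M (\<lambda>y. (B\<^sup>2 + 1) * K y)" using Ki by simp
    show "(\<lambda>y. K y * (g y * ln (g y))) \<in> borel_measurable M" using Km gm by measurable
    show "AE y in M. norm (K y * (g y * ln (g y))) \<le> norm ((B\<^sup>2 + 1) * K y)"
    proof (intro AE_I2)
      fix y
      have "\<bar>g y * ln (g y)\<bar> \<le> (g y)\<^sup>2 + 1" by (rule abs_xlnx_le[OF g0])
      also have "\<dots> \<le> B\<^sup>2 + 1" using g0[of y] gB[of y] by (simp add: power_mono)
      finally have "\<bar>g y * ln (g y)\<bar> \<le> B\<^sup>2 + 1" .
      thus "norm (K y * (g y * ln (g y))) \<le> norm ((B\<^sup>2 + 1) * K y)"
        using K0[of y] by (simp add: abs_mult mult.commute mult_left_mono)
    qed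
  qed
  have iKgZ: "integrable M (\<lambda>y. K y * g y * Z y)"
  proof (rule Bochner_Integration.integrable_bound[of _ "\<lambda>y. B * (K y * exp (Z y) + K y * exp (- Z y))"])
    show "integrable M (\<lambda>y. B * (K y * exp (Z y) + K y * exp (- Z y)))" using Zi1 Zi2 by simp
    show "(\<lambda>y. K y * g y * Z y) \<in> borel_measurable M" using Km gm Zm by measurable
    show "AE y in M. norm (K y * g y * Z y) \<le> norm (B * (K y * exp (Z y) + K y * exp (- Z y)))"
    proof (intro AE_I2)
      fix y
      have "\<bar>K y * g y * Z y\<bar> = K y * (g y * \<bar>Z y\<bar>)" using K0[of y] g0[of y] by (simp add: abs_mult)
      also have "\<dots> \<le> K y * (B * (exp (Z y) + exp (- Z y)))"
        using K0[of y] g0[of y] gB[of y] abs_le_exp_sum[of "Z y"] B0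
        by (intro mult_left_mono mult_mono) auto
      also have "\<dots> = \<bar>B * (K y * exp (Z y) + K y * exp (- Z y))\<bar>"
        using K0[of y] B0 by (simp add: algebra_simps)
      finally show "norm (K y * g y * Z y) \<le> norm (B * (K y * exp (Z y) + K y * exp (- Z y)))" by simp
    qed
  qed
  define c where "c = ln G - ln E"
  have "(\<integral>y. K y * g y * (Z y + c) \<partial>M) \<le> (\<integral>y. K y * (g y * ln (g y)) - K y * g y + exp c * (K y * exp (Z y)) \<partial>M)"
  proof (rule integral_mono)
    show "integrable M (\<lambda>y. K y * g y * (Z y + c))" using iKgZ iKg by (simp add: distrib_left)
    show "integrable M (\<lambda>y. K y * (g y * ln (g y)) - K y * g y + exp c * (K y * exp (Z y)))"
      using iKgl iKg Zi1 by auto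
    fix y
    have "K y * (g y * (Z y + c)) \<le> K y * (g y * ln (g y) - g y + exp (Z y + c))"
      using K0[of y] young_ent[OF g0[of y], of "Z y + c"] by (intro mult_left_mono) auto
    thus "K y * g y * (Z y + c) \<le> K y * (g y * ln (g y)) - K y * g y + exp c * (K y * exp (Z y))"
      by (simp add: algebra_simps exp_add)
  qed
  also have "\<dots> = (\<integral>y. K y * (g y * ln (g y)) \<partial>M) - G + exp c * E"
    using iKgl iKg Zi1 unfolding G_def E_def by simp
  also have "exp c * E = G" unfolding c_def using E0 G unfolding G_def by (simp add: exp_diff)
  finally have *: "(\<integral>y. K y * g y * (Z y + c) \<partial>M) \<le> (\<integral>y. K y * (g y * ln (g y)) \<partial>M)" by simp
  have "(\<integral>y. K y * g y * (Z y + c) \<partial>M) = (\<integral>y. K y * g y * Z y \<partial>M) + c * G"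
    using iKgZ iKg unfolding G_def by (simp add: distrib_left)
  with * show ?thesis unfolding c_def G_def[symmetric] E_def[symmetric] by (simp add: algebra_simps)
qed

lemma quot_bound:
  fixes s l Q :: real
  assumes s0: "s \<noteq> 0" and s1: "\<bar>s\<bar> \<le> 1"
  shows "\<bar>(exp (s * l - s\<^sup>2 * Q) - 1) / s\<bar> \<le> exp (2 * \<bar>Q\<bar>) * (exp (2 * l) + exp (- 2 * l))"
proof -
  define \<phi> where "\<phi> = s * l - s\<^sup>2 * Q"
  define a where "a = \<bar>l\<bar> + \<bar>Q\<bar>"
  have a0: "0 \<le> a" unfolding a_def by simp
  have "\<bar>s\<^sup>2 * Q\<bar> = \<bar>s\<bar> * (\<bar>s\<bar> * \<bar>Q\<bar>)" by (simp add: abs_mult power2_eq_square)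
  also have "\<dots> \<le> \<bar>s\<bar> * \<bar>Q\<bar>" using s1 by (intro mult_left_mono mult_left_le_one_le) auto
  finally have sq: "\<bar>s\<^sup>2 * Q\<bar> \<le> \<bar>s\<bar> * \<bar>Q\<bar>" .
  have "\<bar>\<phi>\<bar> \<le> \<bar>s * l\<bar> + \<bar>s\<^sup>2 * Q\<bar>" unfolding \<phi>_def by (rule abs_triangle_ineq4)
  hence "\<bar>\<phi>\<bar> \<le> \<bar>s\<bar> * \<bar>l\<bar> + \<bar>s\<bar> * \<bar>Q\<bar>" using sq abs_mult[of s l] by linarith
  moreover have "\<bar>s\<bar> * a = \<bar>s\<bar> * \<bar>l\<bar> + \<bar>s\<bar> * \<bar>Q\<bar>" unfolding a_def by (rule distrib_left)
  ultimately have phi: "\<bar>\<phi>\<bar> \<le> \<bar>s\<bar> * a" by linarith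
  have phia: "\<bar>\<phi>\<bar> \<le> a" using phi mult_left_le_one_le[OF a0 abs_ge_zero s1] by linarith
  have "\<bar>exp \<phi> - 1\<bar> \<le> \<bar>\<phi>\<bar> * exp \<bar>\<phi>\<bar>" by (rule abs_exp_sub_one_le)
  also have "\<dots> \<le> (\<bar>s\<bar> * a) * exp a" using phi phia by (intro mult_mono) auto
  finally have "\<bar>exp \<phi> - 1\<bar> / \<bar>s\<bar> \<le> a * exp a" using s0 by (simp add: divide_le_eq mult.commute mult.left_commute)
  also have "\<dots> \<le> exp a * exp a" proof (intro mult_right_mono)
    show "a \<le> exp a" using exp_ge_add_one_self[of a] by linarith
  qed simp
  also have "\<dots> = exp (2 * \<bar>Q\<bar>) * exp (2 * \<bar>l\<bar>)" unfolding a_def by (simp add: exp_add[symmetric])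
  also have "\<dots> \<le> exp (2 * \<bar>Q\<bar>) * (exp (2 * l) + exp (- 2 * l))"
    by (intro mult_left_mono) (cases "l \<ge> 0", auto)
  finally show ?thesis unfolding \<phi>_def by (simp add: abs_divide)
qed

lemma core_deriv:
  fixes M :: "'a measure" and K F L :: "'a \<Rightarrow> real" and Q B :: real
  assumes Km: "K \<in> borel_measurable M" and K0: "\<And>y. 0 \<le> K y"
    and Fm: "F \<in> borel_measurable M" and FB: "\<And>y. \<bar>F y\<bar> \<le> B"
    and Lm: "L \<in> borel_measurable M"
    and Ei: "\<And>s. integrable M (\<lambda>y. K y * exp (s * L y))"
  shows "((\<lambda>s. \<integral>y. K y * F y * exp (s * L y - s\<^sup>2 * Q) \<partial>M) has_real_derivative
           (\<integral>y. K y * F y * L y \<partial>M)) (at 0)"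
proof -
  define h where "h = (\<lambda>s. \<integral>y. K y * F y * exp (s * L y - s\<^sup>2 * Q) \<partial>M)"
  have B0: "0 \<le> B" using FB[of undefined] by linarith
  have ints: "integrable M (\<lambda>y. K y * F y * exp (s * L y - s\<^sup>2 * Q))" for s
  proof (rule Bochner_Integration.integrable_bound[of _ "\<lambda>y. B * exp (- s\<^sup>2 * Q) * (K y * exp (s * L y))"])
    show "integrable M (\<lambda>y. B * exp (- s\<^sup>2 * Q) * (K y * exp (s * L y)))" using Ei[of s] by simp
    show "(\<lambda>y. K y * F y * exp (s * L y - s\<^sup>2 * Q)) \<in> borel_measurable M" using Km Fm Lm by measurable
    show "AE y in M. norm (K y * F y * exp (s * L y - s\<^sup>2 * Q)) \<le> norm (B * exp (- s\<^sup>2 * Q) * (K y * exp (s * L y)))"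
    proof (intro AE_I2)
      fix y
      have "\<bar>K y * F y * exp (s * L y - s\<^sup>2 * Q)\<bar> = K y * \<bar>F y\<bar> * (exp (- s\<^sup>2 * Q) * exp (s * L y))"
        using K0[of y] by (simp add: abs_mult exp_add[symmetric])
      also have "\<dots> \<le> K y * B * (exp (- s\<^sup>2 * Q) * exp (s * L y))"
        using K0[of y] FB[of y] by (intro mult_right_mono mult_left_mono) auto
      finally show "norm (K y * F y * exp (s * L y - s\<^sup>2 * Q)) \<le> norm (B * exp (- s\<^sup>2 * Q) * (K y * exp (s * L y)))"
        using K0[of y] B0 by (simp add: abs_mult algebra_simps)
    qed
  qed
  have h0: "h 0 = (\<integral>y. K y * F y \<partial>M)" unfolding h_def by simp
  define w where "w = (\<lambda>y. B * exp (2 * \<bar>Q\<bar>) * (K y * exp (2 * L y) + K y * exp (- 2 * L y)))"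
  have wi: "integrable M w" unfolding w_def using Ei[of 2] Ei[of "-2"] by simp
  have phid: "((\<lambda>s. (exp (s * l - s\<^sup>2 * Q) - exp (0 * l - 0\<^sup>2 * Q)) / (s - 0)) \<longlongrightarrow> l) (at 0)" for l
  proof -
    have "((\<lambda>s. exp (s * l - s\<^sup>2 * Q)) has_real_derivative (exp (0 * l - 0\<^sup>2 * Q) * (l - 2 * 0 * Q))) (at 0)"
      by (auto intro!: derivative_eq_intros)
    thus ?thesis unfolding has_field_derivative_iff by simp
  qed
  have "((\<lambda>s. (h s - h 0) / (s - 0)) \<longlongrightarrow> (\<integral>y. K y * F y * L y \<partial>M)) (at 0)"
  proof (unfold tendsto_at_iff_sequentially, intro allI impI)
    fix X :: "nat \<Rightarrow> real"
    assume Xn0: "\<forall>i. X i \<in> UNIV - {0}" and X0: "X \<longlonglongrightarrow> 0"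
    from X0 have "eventually (\<lambda>n. \<bar>X n\<bar> \<le> 1) sequentially"
      by (auto dest!: tendstoD[where e=1] simp: dist_real_def eventually_mono)
    then obtain N where N: "\<And>n. n \<ge> N \<Longrightarrow> \<bar>X n\<bar> \<le> 1" by (auto simp: eventually_sequentially)
    define q where "q = (\<lambda>s y. K y * F y * ((exp (s * L y - s\<^sup>2 * Q) - 1) / s))"
    have qeq: "(h s - h 0) / s = (\<integral>y. q s y \<partial>M)" for s
    proof -
      have "h s - h 0 = (\<integral>y. K y * F y * exp (s * L y - s\<^sup>2 * Q) - K y * F y \<partial>M)"
        unfolding h_def using ints[of s] ints[of 0] by (simp add: Bochner_Integration.integral_diff)
      also have "\<dots> = (\<integral>y. K y * F y * (exp (s * L y - s\<^sup>2 * Q) - 1) \<partial>M)"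
        by (simp add: algebra_simps)
      finally show ?thesis unfolding q_def by (simp add: integral_divide_zero)
    qed
    have "(\<lambda>n. \<integral>y. q (X (n + N)) y \<partial>M) \<longlonglongrightarrow> (\<integral>y. K y * F y * L y \<partial>M)"
    proof (rule integral_dominated_convergence[where w=w])
      show "(\<lambda>y. K y * F y * L y) \<in> borel_measurable M" using Km Fm Lm by measurable
      show "\<And>n. (q (X (n + N))) \<in> borel_measurable M" unfolding q_def using Km Fm Lm by measurable
      show "integrable M w" by (rule wi)
      show "AE y in M. (\<lambda>n. q (X (n + N)) y) \<longlonglongrightarrow> K y * F y * L y"
      proof (intro AE_I2)
        fix y
        have Xs: "(\<lambda>n. X (n + N)) \<longlonglongrightarrow> 0" using X0 by (rule LIMSEQ_ignore_initial_segment)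
        have "((\<lambda>s. (exp (s * L y - s\<^sup>2 * Q) - exp (0 * L y - 0\<^sup>2 * Q)) / (s - 0)) \<circ> (\<lambda>n. X (n + N))) \<longlonglongrightarrow> L y"
          using phid[of "L y", unfolded tendsto_at_iff_sequentially] Xn0 Xs by auto
        hence "(\<lambda>n. (exp (X (n + N) * L y - (X (n + N))\<^sup>2 * Q) - 1) / X (n + N)) \<longlonglongrightarrow> L y"
          by (simp add: o_def)
        thus "(\<lambda>n. q (X (n + N)) y) \<longlonglongrightarrow> K y * F y * L y"
          unfolding q_def by (intro tendsto_mult_left)
      qed
      show "AE y in M. norm (q (X (n + N)) y) \<le> w y" for n
      proof (intro AE_I2)
        fix y
        have "\<bar>q (X (n + N)) y\<bar> = K y * \<bar>F y\<bar> * \<bar>(exp (X (n + N) * L y - (X (n + N))\<^sup>2 * Q) - 1) / X (n + N)\<bar>"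
          unfolding q_def using K0[of y] by (simp add: abs_mult)
        also have "\<dots> \<le> K y * B * (exp (2 * \<bar>Q\<bar>) * (exp (2 * L y) + exp (- 2 * L y)))"
          using K0[of y] FB[of y] B0 quot_bound[of "X (n + N)" "L y" Q] Xn0 N[of "n + N"]
          by (intro mult_mono mult_left_mono) auto
        also have "\<dots> = w y" unfolding w_def by (simp add: algebra_simps)
        finally show "norm (q (X (n + N)) y) \<le> w y" by simp
      qed
    qed
    hence "(\<lambda>n. ((\<lambda>s. (h s - h 0) / (s - 0)) \<circ> X) (n + N)) \<longlonglongrightarrow> (\<integral>y. K y * F y * L y \<partial>M)"
      by (simp add: qeq o_def)
    thus "((\<lambda>s. (h s - h 0) / (s - 0)) \<circ> X) \<longlonglongrightarrow> (\<integral>y. K y * F y * L y \<partial>M)"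
      by (rule LIMSEQ_offset)
  qed
  thus ?thesis unfolding h_def[symmetric] by (simp add: has_field_derivative_iff)
qed

lemma Basis_real_vec: "(Basis :: (real^'d) set) = range (\<lambda>j. axis j 1)"
  by (auto simp: Basis_vec_def)

lemma nn_integral_vec_prod:
  fixes \<phi> :: "'d::finite \<Rightarrow> real \<Rightarrow> ennreal"
  assumes [measurable]: "\<And>j. \<phi> j \<in> borel_measurable borel"
  shows "(\<integral>\<^sup>+x. (\<Prod>j\<in>UNIV. \<phi> j (x $ j)) \<partial>(lborel :: (real^'d) measure)) = (\<Prod>j\<in>UNIV. \<integral>\<^sup>+z. \<phi> j z \<partial>lborel)"
proof -
  have inj: "inj (\<lambda>j::'d. axis j (1::real))" by (auto simp: inj_def axis_eq_axis)
  have eq1: "(\<Prod>b\<in>Basis. \<phi> (axis_index b) (x \<bullet> b)) = (\<Prod>j\<in>UNIV. \<phi> j (x $ j))" for x :: "real^'d"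
    unfolding Basis_real_vec by (subst prod.reindex[OF inj]) (simp add: inner_axis)
  have eq2: "(\<Prod>b\<in>(Basis::(real^'d) set). \<integral>\<^sup>+z. \<phi> (axis_index b) z \<partial>lborel) = (\<Prod>j\<in>UNIV. \<integral>\<^sup>+z. \<phi> j z \<partial>lborel)"
    unfolding Basis_real_vec by (subst prod.reindex[OF inj]) simp
  have "(\<integral>\<^sup>+x. (\<Prod>b\<in>Basis. \<phi> (axis_index b) (x \<bullet> b)) \<partial>(lborel :: (real^'d) measure)) = (\<Prod>b\<in>(Basis::(real^'d) set). \<integral>\<^sup>+z. \<phi> (axis_index b) z \<partial>lborel)"
    by (rule nn_integral_lborel_prod) auto
  thus ?thesis unfolding eq1 eq2 .
qed

lemma kolm_det_eq: "kolm_det \<sigma> t = \<sigma>^4 * t^4 / 12"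
  unfolding kolm_det_def kolm_var_b_def kolm_var_c_def kolm_cov_def by (simp add: eval_nat_numeral field_simps)

lemma density2_factor:
  assumes "\<sigma> > 0" "t > 0"
  shows "kolm_density2 \<sigma> t b c = normal_density 0 (sqrt (kolm_var_b \<sigma> t)) b *
     normal_density (kolm_cov \<sigma> t * b / kolm_var_b \<sigma> t) (sqrt (kolm_det \<sigma> t / kolm_var_b \<sigma> t)) c"
proof -
  define Vb where "Vb = kolm_var_b \<sigma> t"
  define C where "C = kolm_cov \<sigma> t"
  define Vc where "Vc = kolm_var_c \<sigma> t"
  define D where "D = kolm_det \<sigma> t"
  have Vb: "Vb > 0" unfolding Vb_def kolm_var_b_def using assms by simp
  have D: "D > 0" unfolding D_def kolm_det_eq using assms by simp
  have CD: "C\<^sup>2 + D = Vb * Vc" unfolding D_def kolm_det_def Vb_def Vc_def C_def by simp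
  have n1: "sqrt (2 * pi * (sqrt Vb)\<^sup>2) * sqrt (2 * pi * (sqrt (D / Vb))\<^sup>2) = 2 * pi * sqrt D"
  proof -
    have "sqrt (2 * pi * (sqrt Vb)\<^sup>2) * sqrt (2 * pi * (sqrt (D / Vb))\<^sup>2) = sqrt ((2 * pi * Vb) * (2 * pi * (D / Vb)))"
      using Vb D by (simp add: real_sqrt_mult[symmetric])
    also have "(2 * pi * Vb) * (2 * pi * (D / Vb)) = (2 * pi)\<^sup>2 * D" using Vb by (simp add: field_simps power2_eq_square)
    also have "sqrt ((2 * pi)\<^sup>2 * D) = 2 * pi * sqrt D" by (simp add: real_sqrt_mult)
    finally show ?thesis .
  qed
  have e: "- (Vc * b\<^sup>2 - 2 * C * b * c + Vb * c\<^sup>2) / (2 * D) =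
      - (b - 0)\<^sup>2 / (2 * (sqrt Vb)\<^sup>2) + - (c - C * b / Vb)\<^sup>2 / (2 * (sqrt (D / Vb))\<^sup>2)"
  proof -
    have Vce: "Vc = (C\<^sup>2 + D) / Vb" using CD Vb by (simp add: field_simps)
    show ?thesis using Vb D by (subst Vce) (simp add: field_simps power2_eq_square)
  qed
  define ea where "ea = - (b - 0)\<^sup>2 / (2 * (sqrt Vb)\<^sup>2)"
  define eb where "eb = - (c - C * b / Vb)\<^sup>2 / (2 * (sqrt (D / Vb))\<^sup>2)"
  define na where "na = sqrt (2 * pi * (sqrt Vb)\<^sup>2)"
  define nb where "nb = sqrt (2 * pi * (sqrt (D / Vb))\<^sup>2)"
  have lhs: "kolm_density2 \<sigma> t b c = exp ea * exp eb / (na * nb)"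
    unfolding kolm_density2_def Vb_def[symmetric] C_def[symmetric] Vc_def[symmetric] D_def[symmetric]
    by (simp only: e ea_def eb_def na_def nb_def exp_add n1)
  have rhs: "normal_density 0 (sqrt Vb) b * normal_density (C * b / Vb) (sqrt (D / Vb)) c = 1 / na * exp ea * (1 / nb * exp eb)"
    unfolding normal_density_def na_def nb_def ea_def eb_def by (rule refl)
  show ?thesis unfolding Vb_def[symmetric] C_def[symmetric] D_def[symmetric] lhs rhs
    by (simp add: divide_inverse inverse_mult_distrib mult_ac)
qed

lemma nn_integral_normal_density: "s > 0 \<Longrightarrow> (\<integral>\<^sup>+x. ennreal (normal_density \<mu> s x) \<partial>lborel) = 1"
  by (subst nn_integral_eq_integral) (auto intro: integrable_normal_density integral_normal_density)

lemma meas_fst_nth[measurable]: "(\<lambda>x::(real^'d) \<times> (real^'d). fst x $ j) \<in> borel_measurable borel"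
  by (intro borel_measurable_continuous_onI continuous_intros)
lemma meas_snd_nth[measurable]: "(\<lambda>x::(real^'d) \<times> (real^'d). snd x $ j) \<in> borel_measurable borel"
  by (intro borel_measurable_continuous_onI continuous_intros)

lemma density2_nonneg: "\<sigma> > 0 \<Longrightarrow> t > 0 \<Longrightarrow> 0 \<le> kolm_density2 \<sigma> t b c"
  by (simp add: density2_factor)

lemma kolm_density_nonneg: "\<sigma> > 0 \<Longrightarrow> t > 0 \<Longrightarrow> 0 \<le> kolm_density \<sigma> t b c"
  unfolding kolm_density_def by (intro prod_nonneg) (simp add: density2_nonneg)

lemma kolm_density_measurable[measurable]:
  "(\<lambda>y. kolm_density \<sigma> t (fst y) (snd y)) \<in> borel_measurable (borel :: ((real^'d::finite) \<times> (real^'d)) measure)"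
  unfolding kolm_density_def kolm_density2_def by measurable

lemma kolm_density_nn:
  assumes s: "\<sigma> > 0" and t: "t > 0"
  shows "(\<integral>\<^sup>+y. ennreal (kolm_density \<sigma> t (fst y) (snd y)) \<partial>(lborel :: ((real^'d::finite) \<times> (real^'d)) measure)) = 1"
proof -
  define Vb where "Vb = kolm_var_b \<sigma> t"
  have Vb: "Vb > 0" unfolding Vb_def kolm_var_b_def using s t by simp
  have D: "kolm_det \<sigma> t / Vb > 0" unfolding kolm_det_eq using s t Vb by simp
  have inner: "(\<integral>\<^sup>+c. ennreal (kolm_density \<sigma> t b c) \<partial>lborel) = (\<Prod>j\<in>UNIV. ennreal (normal_density 0 (sqrt Vb) (b $ j)))" for b :: "real^'d"
  proof -
    have "(\<integral>\<^sup>+c. ennreal (kolm_density \<sigma> t b c) \<partial>lborel) = (\<integral>\<^sup>+c. (\<Prod>j\<in>UNIV. ennreal (kolm_density2 \<sigma> t (b $ j) (c $ j))) \<partial>lborel)"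
      unfolding kolm_density_def using s t by (subst prod_ennreal) (auto simp: density2_nonneg)
    also have "\<dots> = (\<Prod>j\<in>UNIV. \<integral>\<^sup>+z. ennreal (kolm_density2 \<sigma> t (b $ j) z) \<partial>lborel)"
      by (rule nn_integral_vec_prod) (unfold kolm_density2_def, measurable)
    also have "\<dots> = (\<Prod>j\<in>UNIV. ennreal (normal_density 0 (sqrt Vb) (b $ j)))"
    proof (intro prod.cong refl)
      fix j
      have "(\<integral>\<^sup>+z. ennreal (kolm_density2 \<sigma> t (b $ j) z) \<partial>lborel) =
         (\<integral>\<^sup>+z. ennreal (normal_density 0 (sqrt Vb) (b $ j)) * ennreal (normal_density (kolm_cov \<sigma> t * (b $ j) / Vb) (sqrt (kolm_det \<sigma> t / Vb)) z) \<partial>lborel)"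
        unfolding Vb_def using s t by (simp add: density2_factor ennreal_mult)
      also have "\<dots> = ennreal (normal_density 0 (sqrt Vb) (b $ j))"
        using D by (subst nn_integral_cmult) (auto simp: nn_integral_normal_density)
      finally show "(\<integral>\<^sup>+z. ennreal (kolm_density2 \<sigma> t (b $ j) z) \<partial>lborel) = ennreal (normal_density 0 (sqrt Vb) (b $ j))" .
    qed
    finally show ?thesis .
  qed
  have "(\<integral>\<^sup>+y. ennreal (kolm_density \<sigma> t (fst y) (snd y)) \<partial>(lborel :: ((real^'d::finite) \<times> (real^'d)) measure))
      = (\<integral>\<^sup>+y. ennreal (kolm_density \<sigma> t (fst y) (snd y)) \<partial>(lborel \<Otimes>\<^sub>M lborel :: ((real^'d::finite) \<times> (real^'d)) measure))"
    by (simp add: lborel_prod)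
  also have "\<dots> = (\<integral>\<^sup>+b. \<integral>\<^sup>+c. ennreal (kolm_density \<sigma> t b c) \<partial>lborel \<partial>(lborel :: (real^'d) measure))"
    by (subst lborel.nn_integral_fst[symmetric]) (auto simp: lborel_prod)
  also have "\<dots> = (\<integral>\<^sup>+b. (\<Prod>j\<in>UNIV. ennreal (normal_density 0 (sqrt Vb) (b $ j))) \<partial>(lborel :: (real^'d) measure))"
    by (simp add: inner)
  also have "\<dots> = (\<Prod>j\<in>(UNIV::'d set). \<integral>\<^sup>+z. ennreal (normal_density 0 (sqrt Vb) z) \<partial>lborel)"
    by (rule nn_integral_vec_prod) measurable
  also have "\<dots> = 1" using Vb by (simp add: nn_integral_normal_density)
  finally show ?thesis .
qed

definition qf :: "real \<Rightarrow> real \<Rightarrow> real \<Rightarrow> real \<Rightarrow> real" where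
  "qf \<sigma> t a c = (kolm_var_c \<sigma> t * a\<^sup>2 - 2 * kolm_cov \<sigma> t * a * c + kolm_var_b \<sigma> t * c\<^sup>2) / (2 * kolm_det \<sigma> t)"

definition bf :: "real \<Rightarrow> real \<Rightarrow> real \<Rightarrow> real \<Rightarrow> real \<Rightarrow> real \<Rightarrow> real" where
  "bf \<sigma> t b c \<alpha> \<gamma> = (kolm_var_c \<sigma> t * b * \<alpha> - kolm_cov \<sigma> t * (b * \<gamma> + c * \<alpha>) + kolm_var_b \<sigma> t * c * \<gamma>) / kolm_det \<sigma> t"

definition Lw :: "real \<Rightarrow> real \<Rightarrow> (real^'d::finite) \<times> (real^'d) \<Rightarrow> (real^'d) \<times> (real^'d) \<Rightarrow> real" where
  "Lw \<sigma> t w y = (\<Sum>j\<in>UNIV. bf \<sigma> t (fst y $ j) (snd y $ j) (fst w $ j) (snd w $ j))"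

definition Qw :: "real \<Rightarrow> real \<Rightarrow> (real^'d::finite) \<times> (real^'d) \<Rightarrow> real" where
  "Qw \<sigma> t w = (\<Sum>j\<in>UNIV. qf \<sigma> t (fst w $ j) (snd w $ j))"

abbreviation KK :: "real \<Rightarrow> real \<Rightarrow> (real^'d::finite) \<times> (real^'d) \<Rightarrow> real" where
  "KK \<sigma> t y \<equiv> kolm_density \<sigma> t (fst y) (snd y)"

lemma Lw_measurable[measurable]: "Lw \<sigma> t w \<in> borel_measurable borel"
  unfolding Lw_def bf_def by measurable

lemma density2_shift:
  assumes "\<sigma> > 0" "t > 0"
  shows "kolm_density2 \<sigma> t (b - s * \<alpha>) (c - s * \<gamma>) = kolm_density2 \<sigma> t b c * exp (s * bf \<sigma> t b c \<alpha> \<gamma> - s\<^sup>2 * qf \<sigma> t \<alpha> \<gamma>)"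
proof -
  have D: "kolm_det \<sigma> t \<noteq> 0" unfolding kolm_det_eq using assms by simp
  have "- (kolm_var_c \<sigma> t * (b - s * \<alpha>)\<^sup>2 - 2 * kolm_cov \<sigma> t * (b - s * \<alpha>) * (c - s * \<gamma>) + kolm_var_b \<sigma> t * (c - s * \<gamma>)\<^sup>2) / (2 * kolm_det \<sigma> t)
     = - (kolm_var_c \<sigma> t * b\<^sup>2 - 2 * kolm_cov \<sigma> t * b * c + kolm_var_b \<sigma> t * c\<^sup>2) / (2 * kolm_det \<sigma> t) + (s * bf \<sigma> t b c \<alpha> \<gamma> - s\<^sup>2 * qf \<sigma> t \<alpha> \<gamma>)"
    unfolding bf_def qf_def using D by (simp add: field_simps power2_eq_square)
  thus ?thesis unfolding kolm_density2_def by (simp add: exp_add)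
qed

lemma density_shift:
  assumes "\<sigma> > 0" "t > 0"
  shows "KK \<sigma> t (y - s *\<^sub>R w) = KK \<sigma> t y * exp (s * Lw \<sigma> t w y - s\<^sup>2 * Qw \<sigma> t w)"
proof -
  have "KK \<sigma> t (y - s *\<^sub>R w) = (\<Prod>j\<in>UNIV. kolm_density2 \<sigma> t (fst y $ j) (snd y $ j) * exp (s * bf \<sigma> t (fst y $ j) (snd y $ j) (fst w $ j) (snd w $ j) - s\<^sup>2 * qf \<sigma> t (fst w $ j) (snd w $ j)))"
    unfolding kolm_density_def using assms by (simp add: density2_shift[symmetric])
  also have "\<dots> = KK \<sigma> t y * (\<Prod>j\<in>UNIV. exp (s * bf \<sigma> t (fst y $ j) (snd y $ j) (fst w $ j) (snd w $ j) - s\<^sup>2 * qf \<sigma> t (fst w $ j) (snd w $ j)))"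
    unfolding kolm_density_def by (rule prod.distrib)
  also have "(\<Prod>j\<in>UNIV. exp (s * bf \<sigma> t (fst y $ j) (snd y $ j) (fst w $ j) (snd w $ j) - s\<^sup>2 * qf \<sigma> t (fst w $ j) (snd w $ j)))
      = exp (s * Lw \<sigma> t w y - s\<^sup>2 * Qw \<sigma> t w)"
    unfolding Lw_def Qw_def by (simp add: exp_sum[symmetric] sum_distrib_left sum_subtractf)
  finally show ?thesis .
qed

lemma trans_integral:
  fixes g :: "'a::euclidean_space \<Rightarrow> real"
  assumes [measurable]: "g \<in> borel_measurable borel"
  shows "(\<integral>y. g (y + v) \<partial>lborel) = (\<integral>y. g y \<partial>lborel)"
proof -
  have "(\<integral>y. g y \<partial>lborel) = (\<integral>y. g y \<partial>(distr lborel borel ((+) v)))" by (simp add: lborel_distr_plus)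
  also have "\<dots> = (\<integral>y. g (v + y) \<partial>lborel)" by (subst integral_distr) auto
  finally show ?thesis by (simp add: add.commute)
qed

lemma trans_integrable:
  fixes g :: "'a::euclidean_space \<Rightarrow> real"
  assumes [measurable]: "g \<in> borel_measurable borel"
  shows "integrable lborel (\<lambda>y. g (y + v)) \<longleftrightarrow> integrable lborel g"
proof -
  have "integrable lborel g \<longleftrightarrow> integrable (distr lborel borel ((+) v)) g" by (simp add: lborel_distr_plus)
  also have "\<dots> \<longleftrightarrow> integrable lborel (\<lambda>y. g (v + y))" by (subst integrable_distr_eq) auto
  finally show ?thesis by (simp add: add.commute)
qed

lemma K_integrable:
  assumes "\<sigma> > 0" "t > 0"
  shows "integrable lborel (KK \<sigma> t :: (real^'d::finite) \<times> (real^'d) \<Rightarrow> real)" and "(\<integral>y. (KK \<sigma> t y :: real) \<partial>(lborel :: ((real^'d) \<times> (real^'d)) measure)) = 1"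
proof -
  show i: "integrable lborel (KK \<sigma> t :: (real^'d::finite) \<times> (real^'d) \<Rightarrow> real)"
    using assms by (intro integrableI_nonneg) (auto simp: kolm_density_nn kolm_density_nonneg)
  have "ennreal (\<integral>y. (KK \<sigma> t y :: real) \<partial>(lborel :: ((real^'d) \<times> (real^'d)) measure)) = 1"
    using kolm_density_nn[OF assms, where 'd='d] nn_integral_eq_integral[OF i] assms
    by (simp add: kolm_density_nonneg)
  thus "(\<integral>y. (KK \<sigma> t y :: real) \<partial>(lborel :: ((real^'d) \<times> (real^'d)) measure)) = 1"
    by simp
qed

lemma exp_moment:
  fixes w :: "(real^'d::finite) \<times> (real^'d)"
  assumes s: "\<sigma> > 0" and t: "t > 0"
  shows "integrable lborel (\<lambda>y. KK \<sigma> t y * exp (s * Lw \<sigma> t w y))"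
    and "(\<integral>y. KK \<sigma> t y * exp (s * Lw \<sigma> t w y - s\<^sup>2 * Qw \<sigma> t w) \<partial>lborel) = (1::real)"
proof -
  have eq: "KK \<sigma> t y * exp (s * Lw \<sigma> t w y - s\<^sup>2 * Qw \<sigma> t w) = KK \<sigma> t (y + (- s) *\<^sub>R w)" for y
    using density_shift[OF s t, of y s w] by simp
  have i: "integrable lborel (\<lambda>y. KK \<sigma> t (y + (- s) *\<^sub>R w) :: real)"
    by (subst trans_integrable) (auto intro: K_integrable(1)[OF s t, where 'd='d])
  hence "integrable lborel (\<lambda>y. exp (s\<^sup>2 * Qw \<sigma> t w) * (KK \<sigma> t y * exp (s * Lw \<sigma> t w y - s\<^sup>2 * Qw \<sigma> t w)))"
    unfolding eq by simp
  moreover have "exp (s\<^sup>2 * Qw \<sigma> t w) * (KK \<sigma> t y * exp (s * Lw \<sigma> t w y - s\<^sup>2 * Qw \<sigma> t w)) = KK \<sigma> t y * exp (s * Lw \<sigma> t w y)" for y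
    by (simp add: exp_diff)
  ultimately show "integrable lborel (\<lambda>y. KK \<sigma> t y * exp (s * Lw \<sigma> t w y))" by simp
  show "(\<integral>y. KK \<sigma> t y * exp (s * Lw \<sigma> t w y - s\<^sup>2 * Qw \<sigma> t w) \<partial>lborel) = (1::real)"
    unfolding eq by (subst trans_integral) (auto simp: K_integrable[OF s t, where 'd='d])
qed

lemma meas_shift_comp[measurable]:
  fixes \<phi> :: "(real^'d::finite) \<times> (real^'d) \<Rightarrow> real"
  assumes [measurable]: "\<phi> \<in> borel_measurable borel"
  shows "(\<lambda>y::(real^'d) \<times> (real^'d). \<phi> (p + fst y, q + snd y)) \<in> borel_measurable borel"
proof -
  have "(\<lambda>y::(real^'d) \<times> (real^'d). (p + fst y, q + snd y)) \<in> borel \<rightarrow>\<^sub>M borel"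
    by (intro borel_measurable_continuous_onI continuous_intros)
  thus ?thesis by (rule measurable_compose) simp
qed

lemma sg_pair:
  fixes \<phi> :: "(real^'d::finite) \<times> (real^'d) \<Rightarrow> real"
  assumes s: "\<sigma> > 0" and t: "t > 0" and [measurable]: "\<phi> \<in> borel_measurable borel" and B: "\<And>x. \<bar>\<phi> x\<bar> \<le> B"
  shows "kolm_sg \<sigma> t \<phi> (p, \<xi>) = (\<integral>y. KK \<sigma> t y * \<phi> (p + fst y, (\<xi> + t *\<^sub>R p) + snd y) \<partial>lborel)"
    and "integrable lborel (\<lambda>y. KK \<sigma> t y * \<phi> (p + fst y, (\<xi> + t *\<^sub>R p) + snd y))"
proof -
  show i: "integrable lborel (\<lambda>y. KK \<sigma> t y * \<phi> (p + fst y, (\<xi> + t *\<^sub>R p) + snd y))"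
  proof (rule Bochner_Integration.integrable_bound[of _ "\<lambda>y::(real^'d) \<times> (real^'d). B * KK \<sigma> t y"])
    show "integrable lborel (\<lambda>y::(real^'d) \<times> (real^'d). B * KK \<sigma> t y)" using K_integrable(1)[OF s t, where 'd='d] by simp
    show "(\<lambda>y. KK \<sigma> t y * \<phi> (p + fst y, (\<xi> + t *\<^sub>R p) + snd y)) \<in> borel_measurable lborel" by measurable
    show "AE y in lborel. norm (KK \<sigma> t y * \<phi> (p + fst y, (\<xi> + t *\<^sub>R p) + snd y)) \<le> norm (B * KK \<sigma> t y)"
    proof (intro AE_I2)
      fix y :: "(real^'d) \<times> (real^'d)"
      have K0: "0 \<le> KK \<sigma> t y" by (rule kolm_density_nonneg[OF s t])
      have "\<bar>KK \<sigma> t y * \<phi> (p + fst y, (\<xi> + t *\<^sub>R p) + snd y)\<bar> \<le> KK \<sigma> t y * B"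
        using K0 B by (simp add: abs_mult mult_left_mono)
      thus "norm (KK \<sigma> t y * \<phi> (p + fst y, (\<xi> + t *\<^sub>R p) + snd y)) \<le> norm (B * KK \<sigma> t y)"
        using K0 by (simp add: mult.commute)
    qed
  qed
  have i2: "integrable (lborel \<Otimes>\<^sub>M lborel) (\<lambda>y. KK \<sigma> t y * \<phi> (p + fst y, (\<xi> + t *\<^sub>R p) + snd y))"
    using i by (simp add: lborel_prod)
  show "kolm_sg \<sigma> t \<phi> (p, \<xi>) = (\<integral>y. KK \<sigma> t y * \<phi> (p + fst y, (\<xi> + t *\<^sub>R p) + snd y) \<partial>lborel)"
    unfolding kolm_sg_def using lborel_pair.integral_fst'[OF i2] by (simp add: lborel_prod add.assoc)
qed

lemma sg_shift:
  fixes \<phi> :: "(real^'d::finite) \<times> (real^'d) \<Rightarrow> real" and a e p \<xi> :: "real^'d"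
  assumes s: "\<sigma> > 0" and t: "t > 0" and [measurable]: "\<phi> \<in> borel_measurable borel" and B: "\<And>x. \<bar>\<phi> x\<bar> \<le> B"
  shows "kolm_sg \<sigma> t \<phi> (p + r *\<^sub>R a, \<xi> + r *\<^sub>R e) = (\<integral>y. KK \<sigma> t y * \<phi> (p + fst y, (\<xi> + t *\<^sub>R p) + snd y)
            * exp (r * Lw \<sigma> t (a, t *\<^sub>R a + e) y - r\<^sup>2 * Qw \<sigma> t (a, t *\<^sub>R a + e)) \<partial>lborel)"
proof -
  define w where "w = (a, t *\<^sub>R a + e)"
  define g where "g y = KK \<sigma> t (y - r *\<^sub>R w) * \<phi> (p + fst y, (\<xi> + t *\<^sub>R p) + snd y)" for y
  have gm: "g \<in> borel_measurable borel"
  proof -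
    have "(\<lambda>y::(real^'d) \<times> (real^'d). y - r *\<^sub>R w) \<in> borel \<rightarrow>\<^sub>M borel"
      by (intro borel_measurable_continuous_onI continuous_intros)
    hence "(\<lambda>y. KK \<sigma> t (y - r *\<^sub>R w)) \<in> borel_measurable borel"
      by (rule measurable_compose) simp
    thus ?thesis unfolding g_def by measurable
  qed
  have "kolm_sg \<sigma> t \<phi> (p + r *\<^sub>R a, \<xi> + r *\<^sub>R e) =
      (\<integral>y. KK \<sigma> t y * \<phi> ((p + r *\<^sub>R a) + fst y, ((\<xi> + r *\<^sub>R e) + t *\<^sub>R (p + r *\<^sub>R a)) + snd y) \<partial>lborel)"
    by (rule sg_pair(1)[OF s t _ B]) simp
  also have "\<dots> = (\<integral>y. g (y + r *\<^sub>R w) \<partial>lborel)"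
  proof (intro Bochner_Integration.integral_cong refl)
    fix y :: "(real^'d) \<times> (real^'d)"
    have eq: "(p + r *\<^sub>R a + fst y, \<xi> + r *\<^sub>R e + t *\<^sub>R (p + r *\<^sub>R a) + snd y) =
          (p + fst (y + r *\<^sub>R w), \<xi> + t *\<^sub>R p + snd (y + r *\<^sub>R w))"
      unfolding w_def by (simp add: algebra_simps)
    thus "KK \<sigma> t y * \<phi> (p + r *\<^sub>R a + fst y, \<xi> + r *\<^sub>R e + t *\<^sub>R (p + r *\<^sub>R a) + snd y) = g (y + r *\<^sub>R w)"
      unfolding g_def by (simp only: eq[symmetric] add_diff_cancel)
  qed
  also have "\<dots> = (\<integral>y. g y \<partial>lborel)" by (rule trans_integral[OF gm])
  also have "\<dots> = (\<integral>y. KK \<sigma> t y * \<phi> (p + fst y, (\<xi> + t *\<^sub>R p) + snd y)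
            * exp (r * Lw \<sigma> t w y - r\<^sup>2 * Qw \<sigma> t w) \<partial>lborel)"
    unfolding g_def density_shift[OF s t] by (simp add: mult_ac)
  finally show ?thesis unfolding w_def .
qed

lemma int_KFL:
  fixes F :: "(real^'d::finite) \<times> (real^'d) \<Rightarrow> real" and w :: "(real^'d) \<times> (real^'d)"
  assumes s: "\<sigma> > 0" and t: "t > 0" and Fm[measurable]: "F \<in> borel_measurable borel" and B: "\<And>y. \<bar>F y\<bar> \<le> B"
  shows "integrable lborel (\<lambda>y. KK \<sigma> t y * F y * Lw \<sigma> t w y)"
proof (rule Bochner_Integration.integrable_bound[of _ "\<lambda>y. B * (KK \<sigma> t y * exp (1 * Lw \<sigma> t w y) + KK \<sigma> t y * exp ((-1) * Lw \<sigma> t w y))"])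
  show "integrable lborel (\<lambda>y. B * (KK \<sigma> t y * exp (1 * Lw \<sigma> t w y) + KK \<sigma> t y * exp ((-1) * Lw \<sigma> t w y)))"
    using exp_moment(1)[OF s t, of 1 w] exp_moment(1)[OF s t, of "-1" w] by (intro integrable_mult_right Bochner_Integration.integrable_add)
  show "(\<lambda>y. KK \<sigma> t y * F y * Lw \<sigma> t w y) \<in> borel_measurable lborel" by measurable
  show "AE y in lborel. norm (KK \<sigma> t y * F y * Lw \<sigma> t w y) \<le>
     norm (B * (KK \<sigma> t y * exp (1 * Lw \<sigma> t w y) + KK \<sigma> t y * exp ((-1) * Lw \<sigma> t w y)))"
  proof (intro AE_I2)
    fix y :: "(real^'d) \<times> (real^'d)"
    have K0: "0 \<le> KK \<sigma> t y" by (rule kolm_density_nonneg[OF s t])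
    have B0: "0 \<le> B" using B[of y] by linarith
    have "\<bar>KK \<sigma> t y * F y * Lw \<sigma> t w y\<bar> = KK \<sigma> t y * (\<bar>F y\<bar> * \<bar>Lw \<sigma> t w y\<bar>)" using K0 by (simp add: abs_mult)
    also have "\<dots> \<le> KK \<sigma> t y * (B * (exp (Lw \<sigma> t w y) + exp (- Lw \<sigma> t w y)))"
      using K0 B[of y] abs_le_exp_sum[of "Lw \<sigma> t w y"] B0 by (intro mult_left_mono mult_mono) auto
    also have "\<dots> = \<bar>B * (KK \<sigma> t y * exp (1 * Lw \<sigma> t w y) + KK \<sigma> t y * exp ((-1) * Lw \<sigma> t w y))\<bar>"
      using K0 B0 by (simp add: algebra_simps)
    finally show "norm (KK \<sigma> t y * F y * Lw \<sigma> t w y) \<le>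
     norm (B * (KK \<sigma> t y * exp (1 * Lw \<sigma> t w y) + KK \<sigma> t y * exp ((-1) * Lw \<sigma> t w y)))" by simp
  qed
qed

lemma sg_deriv:
  fixes f :: "(real^'d::finite) \<times> (real^'d) \<Rightarrow> real" and a e p \<xi> :: "real^'d"
  assumes s: "\<sigma> > 0" and t: "t > 0" and fm[measurable]: "f \<in> borel_measurable borel"
    and f0: "\<And>x. 0 \<le> f x" and fB: "\<And>x. f x \<le> B"
    and G: "0 < (\<integral>y. KK \<sigma> t y * f (p + fst y, (\<xi> + t *\<^sub>R p) + snd y) \<partial>lborel)"
  shows "deriv (\<lambda>r. ln (kolm_sg \<sigma> t f (p + r *\<^sub>R a, \<xi> + r *\<^sub>R e))) 0 =
     (\<integral>y. KK \<sigma> t y * f (p + fst y, (\<xi> + t *\<^sub>R p) + snd y) * Lw \<sigma> t (a, t *\<^sub>R a + e) y \<partial>lborel)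
     / (\<integral>y. KK \<sigma> t y * f (p + fst y, (\<xi> + t *\<^sub>R p) + snd y) \<partial>lborel)"
proof -
  define F where "F y = f (p + fst y, (\<xi> + t *\<^sub>R p) + snd y)" for y :: "(real^'d) \<times> (real^'d)"
  define w where "w = (a, t *\<^sub>R a + e)"
  define h where "h r = (\<integral>y. KK \<sigma> t y * F y * exp (r * Lw \<sigma> t w y - r\<^sup>2 * Qw \<sigma> t w) \<partial>lborel)" for r
  have FB: "\<bar>F y\<bar> \<le> B" for y unfolding F_def using f0 fB by (simp add: abs_le_iff)
  have absf: "\<bar>f x\<bar> \<le> B" for x using f0[of x] fB[of x] by simp
  have Fm: "F \<in> borel_measurable borel" unfolding F_def by measurable
  have hs: "kolm_sg \<sigma> t f (p + r *\<^sub>R a, \<xi> + r *\<^sub>R e) = h r" for r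
    unfolding h_def F_def w_def by (rule sg_shift[OF s t fm absf])
  have h0: "h 0 = (\<integral>y. KK \<sigma> t y * F y \<partial>lborel)" unfolding h_def by simp
  have hd: "(h has_real_derivative (\<integral>y. KK \<sigma> t y * F y * Lw \<sigma> t w y \<partial>lborel)) (at 0)"
    unfolding h_def
    by (rule core_deriv[where M=lborel and B=B]) (auto intro: kolm_density_nonneg[OF s t] exp_moment(1)[OF s t] FB simp: Fm)
  have hpos: "0 < h 0" using G unfolding F_def[symmetric] h0[symmetric] .
  have "((\<lambda>r. ln (h r)) has_real_derivative (inverse (h 0) * (\<integral>y. KK \<sigma> t y * F y * Lw \<sigma> t w y \<partial>lborel))) (at 0)"
    by (rule DERIV_chain2[OF DERIV_ln[OF hpos] hd])
  hence "deriv (\<lambda>r. ln (h r)) 0 = (\<integral>y. KK \<sigma> t y * F y * Lw \<sigma> t w y \<partial>lborel) / h 0"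
    by (intro DERIV_imp_deriv) (simp add: divide_inverse mult.commute)
  thus ?thesis unfolding hs h0 F_def w_def by simp
qed

lemma sg_deriv_zero:
  fixes f :: "(real^'d::finite) \<times> (real^'d) \<Rightarrow> real" and a e p \<xi> :: "real^'d"
  assumes s: "\<sigma> > 0" and t: "t > 0" and fm[measurable]: "f \<in> borel_measurable borel"
    and f0: "\<And>x. 0 \<le> f x" and fB: "\<And>x. f x \<le> B"
    and G: "(\<integral>y. KK \<sigma> t y * f (p + fst y, (\<xi> + t *\<^sub>R p) + snd y) \<partial>lborel) = 0"
  shows "kolm_sg \<sigma> t f (p + r *\<^sub>R a, \<xi> + r *\<^sub>R e) = 0"
proof -
  define F where "F y = f (p + fst y, (\<xi> + t *\<^sub>R p) + snd y)" for y :: "(real^'d) \<times> (real^'d)"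
  have absf: "\<bar>f x\<bar> \<le> B" for x using f0[of x] fB[of x] by simp
  have i: "integrable lborel (\<lambda>y. KK \<sigma> t y * F y)" unfolding F_def by (rule sg_pair(2)[OF s t fm absf])
  have nn: "AE y in lborel. 0 \<le> KK \<sigma> t y * F y"
    unfolding F_def by (intro AE_I2 mult_nonneg_nonneg kolm_density_nonneg[OF s t] f0)
  have "AE y in lborel. KK \<sigma> t y * F y = 0"
    using integral_nonneg_eq_0_iff_AE[OF i nn] G unfolding F_def by simp
  hence "(\<integral>y. KK \<sigma> t y * F y * exp (r * Lw \<sigma> t (a, t *\<^sub>R a + e) y - r\<^sup>2 * Qw \<sigma> t (a, t *\<^sub>R a + e)) \<partial>lborel) = 0"
    by (intro integral_eq_zero_AE) (auto elim!: eventually_mono)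
  thus ?thesis unfolding sg_shift[OF s t fm absf] F_def by simp
qed

lemma qf_identity:
  assumes s: "\<sigma> > 0" and t: "t > 0"
  shows "(\<sigma>\<^sup>2 * t * (u - t / 2 * v)) * u + (\<sigma>\<^sup>2 * t * (- t / 2 * u + t\<^sup>2 / 3 * v)) * v
     - qf \<sigma> t (\<sigma>\<^sup>2 * t * (u - t / 2 * v)) (t * (\<sigma>\<^sup>2 * t * (u - t / 2 * v)) + \<sigma>\<^sup>2 * t * (- t / 2 * u + t\<^sup>2 / 3 * v))
     = \<sigma>\<^sup>2 * t / 2 * ((u - t / 2 * v)\<^sup>2 + t\<^sup>2 / 12 * v\<^sup>2)"
  unfolding qf_def kolm_det_eq kolm_var_b_def kolm_var_c_def kolm_cov_def
  using s t by (simp add: field_simps power2_eq_square) (simp add: eval_nat_numeral algebra_simps)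

lemma bf_lin: "bf \<sigma> t b c \<alpha> (t * \<alpha> + \<beta>) = \<alpha> * bf \<sigma> t b c 1 t + \<beta> * bf \<sigma> t b c 0 1"
  unfolding bf_def by (simp add: algebra_simps add_divide_distrib diff_divide_distrib)

lemma Lw_p: "Lw \<sigma> t (axis i 1, t *\<^sub>R axis i 1 + 0) y = bf \<sigma> t (fst y $ i) (snd y $ i) 1 t"
proof -
  have "Lw \<sigma> t (axis i 1, t *\<^sub>R axis i 1 + 0) y = (\<Sum>j\<in>UNIV. if j = i then bf \<sigma> t (fst y $ i) (snd y $ i) 1 t else 0)"
    unfolding Lw_def by (intro sum.cong refl) (auto simp: axis_def bf_def)
  thus ?thesis by simp
qed

lemma Lw_x: "Lw \<sigma> t (0, t *\<^sub>R 0 + axis i 1) y = bf \<sigma> t (fst y $ i) (snd y $ i) 0 1"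
proof -
  have "Lw \<sigma> t (0, t *\<^sub>R 0 + axis i 1) y = (\<Sum>j\<in>UNIV. if j = i then bf \<sigma> t (fst y $ i) (snd y $ i) 0 1 else 0)"
    unfolding Lw_def by (intro sum.cong refl) (auto simp: axis_def bf_def)
  thus ?thesis by simp
qed

lemma Lw_comb: "Lw \<sigma> t (A, t *\<^sub>R A + Bv) y = (\<Sum>i\<in>UNIV. A $ i * Lw \<sigma> t (axis i 1, t *\<^sub>R axis i 1 + 0) y + Bv $ i * Lw \<sigma> t (0, t *\<^sub>R 0 + axis i 1) y)"
  unfolding Lw_p Lw_x unfolding Lw_def by (simp add: bf_lin)

theorem proposition2p8:
  fixes \<sigma> t :: real
    and f :: "(real^'d::finite) \<times> (real^'d) \<Rightarrow> real"
    and p \<xi> :: "real^'d"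
  assumes sigma_pos: "\<sigma> > 0"
    and t_pos: "t > 0"
    and f_C1: "\<exists>f'. (\<forall>x. (f has_derivative blinfun_apply (f' x)) (at x)) \<and> continuous_on UNIV f'"
    and f_nonneg: "\<And>x. 0 \<le> f x"
    and f_bounded: "bounded (range f)"
  shows "(\<Sum>i\<in>UNIV.
            (deriv (\<lambda>s. ln (kolm_sg \<sigma> t f (p + s *\<^sub>R axis i 1, \<xi>))) 0
             - t / 2 * deriv (\<lambda>s. ln (kolm_sg \<sigma> t f (p, \<xi> + s *\<^sub>R axis i 1))) 0)\<^sup>2
          + t\<^sup>2 / 12 * (deriv (\<lambda>s. ln (kolm_sg \<sigma> t f (p, \<xi> + s *\<^sub>R axis i 1))) 0)\<^sup>2)
         \<le> 2 / (\<sigma>\<^sup>2 * t * kolm_sg \<sigma> t f (p, \<xi>))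
           * (kolm_sg \<sigma> t (\<lambda>x. f x * ln (f x)) (p, \<xi>)
              - kolm_sg \<sigma> t f (p, \<xi>) * ln (kolm_sg \<sigma> t f (p, \<xi>)))"
proof -
  note s = sigma_pos and t = t_pos
  from f_C1 obtain f' where fd: "\<And>x. (f has_derivative blinfun_apply (f' x)) (at x)" by blast
  have fc: "continuous_on UNIV f"
    using fd has_derivative_continuous continuous_at_imp_continuous_on by blast
  have fm[measurable]: "f \<in> borel_measurable borel" by (rule borel_measurable_continuous_onI[OF fc])
  from f_bounded obtain B where fB0: "\<And>x. \<bar>f x\<bar> \<le> B" unfolding bounded_real by auto
  have fB: "f x \<le> B" for x using fB0[of x] by simp
  have B0: "0 \<le> B" using fB0[of undefined] by simp
  define F where "F y = f (p + fst y, (\<xi> + t *\<^sub>R p) + snd y)" for y :: "(real^'d) \<times> (real^'d)"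
  have Fm[measurable]: "F \<in> borel_measurable borel" unfolding F_def by measurable
  have F0: "0 \<le> F y" for y unfolding F_def by (rule f_nonneg)
  have FB: "\<bar>F y\<bar> \<le> B" for y unfolding F_def by (rule fB0)
  define G where "G = (\<integral>y. KK \<sigma> t y * F y \<partial>lborel)"
  have PG: "kolm_sg \<sigma> t f (p, \<xi>) = G" unfolding G_def F_def by (rule sg_pair(1)[OF s t fm fB0])
  have flm[measurable]: "(\<lambda>x. f x * ln (f x)) \<in> borel_measurable borel" by measurable
  have flB: "\<bar>f x * ln (f x)\<bar> \<le> B\<^sup>2 + 1" for x
  proof -
    have "\<bar>f x * ln (f x)\<bar> \<le> (f x)\<^sup>2 + 1" by (rule abs_xlnx_le[OF f_nonneg])
    also have "\<dots> \<le> B\<^sup>2 + 1" using f_nonneg[of x] fB[of x] by (simp add: power_mono)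
    finally show ?thesis .
  qed
  have PE: "kolm_sg \<sigma> t (\<lambda>x. f x * ln (f x)) (p, \<xi>) = (\<integral>y. KK \<sigma> t y * (F y * ln (F y)) \<partial>lborel)"
    unfolding F_def by (rule sg_pair(1)[OF s t flm flB])
  have G0: "0 \<le> G" unfolding G_def
    by (intro integral_nonneg_AE AE_I2 mult_nonneg_nonneg kolm_density_nonneg[OF s t] F0)
  define dp where "dp i = deriv (\<lambda>s. ln (kolm_sg \<sigma> t f (p + s *\<^sub>R axis i 1, \<xi>))) 0" for i
  define dx where "dx i = deriv (\<lambda>s. ln (kolm_sg \<sigma> t f (p, \<xi> + s *\<^sub>R axis i 1))) 0" for i
  have eqp: "(\<lambda>s. ln (kolm_sg \<sigma> t f (p + s *\<^sub>R axis i 1, \<xi>))) = (\<lambda>s. ln (kolm_sg \<sigma> t f (p + s *\<^sub>R axis i 1, \<xi> + s *\<^sub>R 0)))" for i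
    by simp
  have eqx: "(\<lambda>s. ln (kolm_sg \<sigma> t f (p, \<xi> + s *\<^sub>R axis i 1))) = (\<lambda>s. ln (kolm_sg \<sigma> t f (p + s *\<^sub>R 0, \<xi> + s *\<^sub>R axis i 1)))" for i
    by simp
  show ?thesis
  proof (cases "G = 0")
    case True
    have z: "kolm_sg \<sigma> t f (p + r *\<^sub>R a, \<xi> + r *\<^sub>R e) = 0" for r a e
      using sg_deriv_zero[OF s t fm f_nonneg fB, of p \<xi>] True unfolding G_def F_def by blast
    have "dp i = 0" for i
    proof -
      have "(\<lambda>s. ln (kolm_sg \<sigma> t f (p + s *\<^sub>R axis i 1, \<xi> + s *\<^sub>R 0))) = (\<lambda>s. 0)"
        by (rule ext) (simp only: z ln_0)
      thus ?thesis unfolding dp_def eqp by (simp only:) simp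
    qed
    moreover have "dx i = 0" for i
    proof -
      have "(\<lambda>s. ln (kolm_sg \<sigma> t f (p + s *\<^sub>R 0, \<xi> + s *\<^sub>R axis i 1))) = (\<lambda>s. 0)"
        by (rule ext) (simp only: z ln_0)
      thus ?thesis unfolding dx_def eqx by (simp only:) simp
    qed
    ultimately show ?thesis unfolding dp_def[symmetric] dx_def[symmetric] PG True by simp
  next
    case False
    hence Gpos: "0 < G" using G0 by simp
    define Dp where "Dp i = (\<integral>y. KK \<sigma> t y * F y * Lw \<sigma> t (axis i 1, t *\<^sub>R axis i 1 + 0) y \<partial>lborel)" for i
    define Dx where "Dx i = (\<integral>y. KK \<sigma> t y * F y * Lw \<sigma> t (0, t *\<^sub>R 0 + axis i 1) y \<partial>lborel)" for i
    have dpe: "dp i = Dp i / G" for i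
      unfolding dp_def eqp Dp_def G_def F_def
      by (rule sg_deriv[OF s t fm f_nonneg fB]) (use Gpos in \<open>simp add: G_def F_def\<close>)
    have dxe: "dx i = Dx i / G" for i
      unfolding dx_def eqx Dx_def G_def F_def
      by (rule sg_deriv[OF s t fm f_nonneg fB]) (use Gpos in \<open>simp add: G_def F_def\<close>)
    define u where "u i = Dp i / G" for i
    define v where "v i = Dx i / G" for i
    define A where "A = (\<chi> j. \<sigma>\<^sup>2 * t * (u j - t / 2 * v j))"
    define Bv where "Bv = (\<chi> j. \<sigma>\<^sup>2 * t * (- t / 2 * u j + t\<^sup>2 / 3 * v j))"
    define W where "W = (A, t *\<^sub>R A + Bv)"
    define S where "S = (\<Sum>i\<in>UNIV. (u i - t / 2 * v i)\<^sup>2 + t\<^sup>2 / 12 * (v i)\<^sup>2)"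
    define Ent where "Ent = (\<integral>y. KK \<sigma> t y * (F y * ln (F y)) \<partial>lborel) - G * ln G"
    have intp: "integrable lborel (\<lambda>y. KK \<sigma> t y * F y * Lw \<sigma> t w y)" for w
      by (rule int_KFL[OF s t Fm FB])
    have "(\<integral>y. KK \<sigma> t y * F y * Lw \<sigma> t W y \<partial>lborel) =
        (\<integral>y. (\<Sum>i\<in>UNIV. A $ i * (KK \<sigma> t y * F y * Lw \<sigma> t (axis i 1, t *\<^sub>R axis i 1 + 0) y)
             + Bv $ i * (KK \<sigma> t y * F y * Lw \<sigma> t (0, t *\<^sub>R 0 + axis i 1) y)) \<partial>lborel)"
      unfolding W_def Lw_comb[of \<sigma> t A Bv] by (simp add: sum_distrib_left distrib_left mult_ac)
    also have "\<dots> = (\<Sum>i\<in>UNIV. (\<integral>y. A $ i * (KK \<sigma> t y * F y * Lw \<sigma> t (axis i 1, t *\<^sub>R axis i 1 + 0) y)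
             + Bv $ i * (KK \<sigma> t y * F y * Lw \<sigma> t (0, t *\<^sub>R 0 + axis i 1) y) \<partial>lborel))"
      by (rule Bochner_Integration.integral_sum) (use intp in auto)
    also have "\<dots> = (\<Sum>i\<in>UNIV. A $ i * Dp i + Bv $ i * Dx i)"
      unfolding Dp_def Dx_def by (intro sum.cong refl) (simp add: intp)
    finally have lhsW: "(\<integral>y. KK \<sigma> t y * F y * Lw \<sigma> t W y \<partial>lborel) = (\<Sum>i\<in>UNIV. A $ i * Dp i + Bv $ i * Dx i)" .
    have expW: "(\<integral>y. KK \<sigma> t y * exp (Lw \<sigma> t W y) \<partial>lborel) = exp (Qw \<sigma> t W)"
    proof -
      have "(\<integral>y. KK \<sigma> t y * exp (1 * Lw \<sigma> t W y - 1\<^sup>2 * Qw \<sigma> t W) \<partial>lborel) = (1::real)"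
        by (rule exp_moment(2)[OF s t])
      moreover have "(\<lambda>y. KK \<sigma> t y * exp (1 * Lw \<sigma> t W y - 1\<^sup>2 * Qw \<sigma> t W)) = (\<lambda>y. exp (- Qw \<sigma> t W) * (KK \<sigma> t y * exp (Lw \<sigma> t W y)))"
        by (rule ext) (simp add: exp_diff exp_minus divide_inverse mult_ac)
      ultimately have h: "exp (- Qw \<sigma> t W) * (\<integral>y. KK \<sigma> t y * exp (Lw \<sigma> t W y) \<partial>lborel) = 1" by simp
      have "(\<integral>y. KK \<sigma> t y * exp (Lw \<sigma> t W y) \<partial>lborel) = exp (Qw \<sigma> t W) * (exp (- Qw \<sigma> t W) * (\<integral>y. KK \<sigma> t y * exp (Lw \<sigma> t W y) \<partial>lborel))"
        by (simp add: mult.assoc[symmetric] exp_add[symmetric])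
      with h show ?thesis by simp
    qed
    have gib: "(\<integral>y. KK \<sigma> t y * F y * Lw \<sigma> t W y \<partial>lborel) \<le> (\<integral>y. KK \<sigma> t y * (F y * ln (F y)) \<partial>lborel)
      - G * ln G + G * ln (\<integral>y. KK \<sigma> t y * exp (Lw \<sigma> t W y) \<partial>lborel)"
      unfolding G_def
    proof (rule gibbs[where B=B])
      show "(\<lambda>y. KK \<sigma> t y) \<in> borel_measurable lborel" by measurable
      show "\<And>y. 0 \<le> KK \<sigma> t y" by (rule kolm_density_nonneg[OF s t])
      show "integrable lborel (\<lambda>y. KK \<sigma> t y)" by (rule K_integrable(1)[OF s t])
      show "(\<integral>y. KK \<sigma> t y \<partial>lborel) = 1" by (rule K_integrable(2)[OF s t])
      show "F \<in> borel_measurable lborel" by measurable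
      show "\<And>y. 0 \<le> F y" by (rule F0)
      show "\<And>y. F y \<le> B" using FB by (simp add: abs_le_iff)
      show "Lw \<sigma> t W \<in> borel_measurable lborel" by measurable
      show "integrable lborel (\<lambda>y. KK \<sigma> t y * exp (Lw \<sigma> t W y))"
        using exp_moment(1)[OF s t, of 1 W] by simp
      show "integrable lborel (\<lambda>y. KK \<sigma> t y * exp (- Lw \<sigma> t W y))"
        using exp_moment(1)[OF s t, of "-1" W] by simp
      show "0 < (\<integral>y. KK \<sigma> t y * F y \<partial>lborel)" using Gpos unfolding G_def .
    qed
    have QW: "Qw \<sigma> t W = (\<Sum>j\<in>UNIV. qf \<sigma> t (A $ j) (t * A $ j + Bv $ j))"
      unfolding Qw_def W_def by simp
    have key: "(\<Sum>i\<in>UNIV. A $ i * Dp i + Bv $ i * Dx i) - G * Qw \<sigma> t W = G * (\<sigma>\<^sup>2 * t / 2 * S)"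
    proof -
      have pi: "A $ i * Dp i + Bv $ i * Dx i - G * qf \<sigma> t (A $ i) (t * A $ i + Bv $ i)
          = G * (\<sigma>\<^sup>2 * t / 2 * ((u i - t / 2 * v i)\<^sup>2 + t\<^sup>2 / 12 * (v i)\<^sup>2))" for i
      proof -
        have Dpi: "Dp i = G * u i" and Dxi: "Dx i = G * v i" unfolding u_def v_def using Gpos by simp_all
        have "A $ i * Dp i + Bv $ i * Dx i - G * qf \<sigma> t (A $ i) (t * A $ i + Bv $ i)
           = G * (A $ i * u i + Bv $ i * v i - qf \<sigma> t (A $ i) (t * A $ i + Bv $ i))"
          unfolding Dpi Dxi by (simp add: algebra_simps)
        also have "\<dots> = G * (\<sigma>\<^sup>2 * t / 2 * ((u i - t / 2 * v i)\<^sup>2 + t\<^sup>2 / 12 * (v i)\<^sup>2))"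
          unfolding A_def Bv_def by (simp only: vec_lambda_beta qf_identity[OF s t])
        finally show ?thesis .
      qed
      have "(\<Sum>i\<in>UNIV. A $ i * Dp i + Bv $ i * Dx i - G * qf \<sigma> t (A $ i) (t * A $ i + Bv $ i))
          = (\<Sum>i\<in>UNIV. G * (\<sigma>\<^sup>2 * t / 2 * ((u i - t / 2 * v i)\<^sup>2 + t\<^sup>2 / 12 * (v i)\<^sup>2)))"
        by (intro sum.cong refl pi)
      thus ?thesis unfolding QW S_def by (simp add: sum_subtractf sum_distrib_left)
    qed
    have "G * (\<sigma>\<^sup>2 * t / 2 * S) \<le> Ent"
      using gib key unfolding lhsW expW Ent_def by simp
    hence "S \<le> 2 / (\<sigma>\<^sup>2 * t * G) * Ent"
      using Gpos s t by (simp add: field_simps)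
    thus ?thesis unfolding dp_def[symmetric] dx_def[symmetric] dpe dxe u_def[symmetric] v_def[symmetric] PG PE
      S_def Ent_def by simp
  qed
qed

end
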